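(* Let $L$ be a finite flag complex of dimension $k$, let $M\in Z_k(L;\mathbb{Z}/2)$ be a $k$-cycle (identified with its support), and let $\Delta$ be any $k$-simplex of $M$. Then $(M,\Delta)$ satisfies the $*$-condition: for all $k$-simplices $\sigma,\tau$ of $M$ such that every vertex of $\Delta$ lies in $\sigma\cup\tau$, one has $\sigma\cap\tau\subset\Delta$.
   Context: A flag complex is a simplicial complex in which every finite set of pairwise adjacent vertices spans a simplex. *)

theory Defs
  imports Main
begin

definition simplicial_complex :: "'a set set \<Rightarrow> bool" where
  "simplicial_complex L \<longleftrightarrow>
     (\<forall>\<sigma>\<in>L. finite \<sigma> \<and> \<sigma> \<noteq> {}) \<and>
     (\<forall>\<sigma>\<in>L. \<forall>\<tau>. \<tau> \<subseteq> \<sigma> \<and> \<tau> \<noteq> {} \<longrightarrow> \<tau> \<in> L)"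

text \<open>Flag complex: every finite nonempty set of pairwise adjacent vertices spans a simplex
(for v = w the condition says v is a vertex).\<close>
definition flag_complex :: "'a set set \<Rightarrow> bool" where
  "flag_complex L \<longleftrightarrow> simplicial_complex L \<and>
     (\<forall>S. finite S \<and> S \<noteq> {} \<and> (\<forall>v\<in>S. \<forall>w\<in>S. {v, w} \<in> L) \<longrightarrow> S \<in> L)"

definition complex_dim :: "'a set set \<Rightarrow> nat \<Rightarrow> bool" where
  "complex_dim L k \<longleftrightarrow> (\<exists>\<sigma>\<in>L. card \<sigma> = k + 1) \<and> (\<forall>\<sigma>\<in>L. card \<sigma> \<le> k + 1)"

text \<open>A k-cycle with Z/2 coefficients, identified with its support: a set of k-simplices
of L whose mod-2 boundary vanishes, i.e. every (k-1)-simplex of L is a face of an even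
number of simplices of M.\<close>
definition mod2_cycle :: "'a set set \<Rightarrow> nat \<Rightarrow> 'a set set \<Rightarrow> bool" where
  "mod2_cycle L k M \<longleftrightarrow> M \<subseteq> {\<sigma>\<in>L. card \<sigma> = k + 1} \<and>
     (\<forall>\<rho>\<in>L. card \<rho> = k \<longrightarrow> even (card {\<sigma>\<in>M. \<rho> \<subseteq> \<sigma>}))"

definition star_condition :: "'a set set \<Rightarrow> 'a set \<Rightarrow> bool" where
  "star_condition M \<Delta> \<longleftrightarrow>
     (\<forall>\<sigma>\<in>M. \<forall>\<tau>\<in>M. \<Delta> \<subseteq> \<sigma> \<union> \<tau> \<longrightarrow> \<sigma> \<inter> \<tau> \<subseteq> \<Delta>)"

end

theory Submission
  imports Defs
begin

theorem mainTheorem12: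
  fixes L M :: "'a set set" and \<Delta> :: "'a set" and k :: nat
  assumes "finite L" and "flag_complex L" and "complex_dim L k"
    and "mod2_cycle L k M" and "\<Delta> \<in> M"
  shows "star_condition M \<Delta>"
  unfolding star_condition_def
proof (intro ballI impI subsetI)
  fix \<sigma> \<tau> v
  assume s: "\<sigma> \<in> M" and t: "\<tau> \<in> M" and D: "\<Delta> \<subseteq> \<sigma> \<union> \<tau>" and v: "v \<in> \<sigma> \<inter> \<tau>"
  have sc: "simplicial_complex L" and fl: "\<forall>S. finite S \<and> S \<noteq> {} \<and> (\<forall>v\<in>S. \<forall>w\<in>S. {v, w} \<in> L) \<longrightarrow> S \<in> L"
    using assms(2) unfolding flag_complex_def by blast+
  have MsubL: "M \<subseteq> L" and cardM: "\<forall>x\<in>M. card x = k + 1" using assms(4) unfolding mod2_cycle_def by auto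
  have dimL: "\<forall>x\<in>L. card x \<le> k + 1" using assms(3) unfolding complex_dim_def by auto
  have fin: "\<forall>x\<in>L. finite x" and down: "\<forall>x\<in>L. \<forall>y. y \<subseteq> x \<and> y \<noteq> {} \<longrightarrow> y \<in> L"
    using sc unfolding simplicial_complex_def by blast+
  have sL: "\<sigma> \<in> L" "\<tau> \<in> L" "\<Delta> \<in> L" using subsetD[OF MsubL] s t assms(5) by blast+
  show "v \<in> \<Delta>"
  proof (rule ccontr)
    assume nv: "v \<notin> \<Delta>"
    let ?S = "insert v \<Delta>"
    have edges: "\<forall>a\<in>?S. \<forall>b\<in>?S. {a, b} \<in> L"
    proof (intro ballI)
      fix a b assume a: "a \<in> ?S" and b: "b \<in> ?S"
      have ab: "\<And>x. x \<in> L \<Longrightarrow> a \<in> x \<Longrightarrow> b \<in> x \<Longrightarrow> {a,b} \<in> L"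
      proof -
        fix x assume "x \<in> L" "a \<in> x" "b \<in> x"
        then show "{a,b} \<in> L" using down[rule_format, of x "{a,b}"] by simp
      qed
      show "{a, b} \<in> L"
      proof (cases "a = v")
        case True
        then show ?thesis
        proof (cases "b = v")
          case True then show ?thesis using ab[OF sL(1)] v \<open>a = v\<close> by auto
        next
          case False then have "b \<in> \<sigma> \<or> b \<in> \<tau>" using b D by auto
          then show ?thesis using ab[OF sL(1)] ab[OF sL(2)] v \<open>a = v\<close> by auto
        qed
      next
        case False
        then have aD: "a \<in> \<Delta>" using a by auto
        show ?thesis
        proof (cases "b = v")
          case True
          have "a \<in> \<sigma> \<or> a \<in> \<tau>" using aD D by auto
          then show ?thesis using ab[OF sL(1)] ab[OF sL(2)] v True by auto
        next
          case False then have "b \<in> \<Delta>" using b by auto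
          then show ?thesis using ab[OF sL(3)] aD by auto
        qed
      qed
    qed
    have fD: "finite \<Delta>" using fin sL(3) by auto
    have "?S \<in> L" using fl[rule_format, of ?S] edges fD by simp
    hence "card ?S \<le> k + 1" using dimL by blast
    moreover have "card ?S = k + 2" using fD nv cardM[rule_format, OF assms(5)] by simp
    ultimately show False by simp
  qed
qed

end
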